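(* Let $f\colon\mathbb R\to\mathbb R$ be continuous and suppose there are $a>0$ and $b\in\mathbb R$ with $|f(x)|\leqslant a\cosh(bx)$ for all $x$. Fix $\lambda>0$, let $P_n = e^{-\lambda}\lambda^n/n!$, and for $k\geqslant1$ let $h_k\colon y\mapsto f(y)/k$. For a compactly supported Borel probability measure $\rho$ on $\mathbb R$ and $x\in\mathbb R$ define the probability measures $$\sigma^{f,\rho}_x = \sum_{n=0}^\infty P_n\,(h_{n+1})_\star\big(\delta_x*\rho^{*n}\big),\qquad \sigma^{f,\rho} = \sum_{n=0}^\infty P_n\,(h_{n+1})_\star\big(\rho^{*(n+1)}\big),$$ where $(h_k)_\star$ is pushforward, $*$ is convolution and $\rho^{*0}=\delta_0$. Then for every compactly supported probability measure $\rho$ and every $x\in\mathbb R$, the expectations $\langle\sigma^{f,\rho}_x, y\rangle$ and $\langle\sigma^{f,\rho},y\rangle$ are finite; equivalently, $$\sum_{n=0}^\infty \frac{e^{-\lambda}\lambda^n}{(n+1)!}\big|\langle\delta_x*\rho^{*n}, f\rangle\big|<\infty \quad\text{and}\quad \sum_{n=0}^\infty \frac{e^{-\lambda}\lambda^n}{(n+1)!}\big|\langle\rho^{*(n+1)}, f\rangle\big|<\infty.$$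
   Context: $\langle\tau,\phi\rangle=\int\phi\,d\tau$; $\delta_a$ is the Dirac measure at $a$; $\cosh$ is the hyperbolic cosine. Here $\langle\sigma,y\rangle$ denotes the mean $\int y\,d\sigma(y)$. *)

theory Defs
  imports "HOL-Probability.Probability" "HOL-Probability.Convolution"
begin

fun conv_pow :: "real measure \<Rightarrow> nat \<Rightarrow> real measure" where
  "conv_pow \<rho> 0 = return borel 0"
| "conv_pow \<rho> (Suc n) = convolution \<rho> (conv_pow \<rho> n)"

definition poisson_weight :: "real \<Rightarrow> nat \<Rightarrow> real" where
  "poisson_weight l n = exp (- l) * l ^ n / fact n"

definition mixture :: "(nat \<Rightarrow> real) \<Rightarrow> (nat \<Rightarrow> real measure) \<Rightarrow> real measure" where
  "mixture P \<mu> = measure_of UNIV (sets borel)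
      (\<lambda>A. \<Sum>n. ennreal (P n) * emeasure (\<mu> n) A)"

definition hk :: "(real \<Rightarrow> real) \<Rightarrow> nat \<Rightarrow> real \<Rightarrow> real" where
  "hk f k y = f y / real k"

definition sigma_x :: "(real \<Rightarrow> real) \<Rightarrow> real \<Rightarrow> real measure \<Rightarrow> real \<Rightarrow> real measure" where
  "sigma_x f l \<rho> x = mixture (poisson_weight l)
      (\<lambda>n. distr (convolution (return borel x) (conv_pow \<rho> n)) borel (hk f (n + 1)))"

definition sigma :: "(real \<Rightarrow> real) \<Rightarrow> real \<Rightarrow> real measure \<Rightarrow> real measure" where
  "sigma f l \<rho> = mixture (poisson_weight l)
      (\<lambda>n. distr (conv_pow \<rho> (Suc n)) borel (hk f (n + 1)))"

definition compactly_supported_prob :: "real measure \<Rightarrow> bool" where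
  "compactly_supported_prob \<rho> \<longleftrightarrow> prob_space \<rho> \<and> sets \<rho> = sets borel \<and>
      (\<exists>K. compact K \<and> emeasure \<rho> K = 1)"

end

theory Submission
  imports Defs
begin


lemma conv_support:
  assumes M: "prob_space M" and [measurable_cong]: "sets M = sets borel" and N: "prob_space N" and [measurable_cong]: "sets N = sets borel"
    and aM: "AE x in M. \<bar>x\<bar> \<le> A" and aN: "AE y in N. \<bar>y\<bar> \<le> B"
  shows "prob_space (convolution M N) \<and> (AE z in convolution M N. \<bar>z::real\<bar> \<le> A + B)"
proof -
  interpret M: prob_space M by fact
  interpret N: prob_space N by fact
  interpret pair_sigma_finite M N ..
  have ps: "prob_space (M \<Otimes>\<^sub>M N)" by (rule prob_space_pair) fact+
  have meas: "(\<lambda>(x, y). x + y) \<in> measurable (M \<Otimes>\<^sub>M N) (borel :: real measure)"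
    using assms(2) assms(4) by (simp add: measurable_cong_sets[OF sets_pair_measure_cong[OF assms(2) assms(4)] refl])
  have p1: "prob_space (convolution M N)"
    unfolding convolution_def by (rule prob_space.prob_space_distr[OF ps meas])
  have "AE p in M \<Otimes>\<^sub>M N. \<bar>fst p + snd p\<bar> \<le> A + B"
  proof (rule AE_pair_measure)
    show "{x \<in> space (M \<Otimes>\<^sub>M N). \<bar>fst x + snd x\<bar> \<le> A + B} \<in> sets (M \<Otimes>\<^sub>M N)"
      by measurable
    show "AE x in M. AE y in N. \<bar>fst (x, y) + snd (x, y)\<bar> \<le> A + B"
      using aM
    proof eventually_elim
      case (elim x)
      show ?case using aN by eventually_elim (use elim in auto)
    qed
  qed
  then have "AE z in convolution M N. \<bar>z\<bar> \<le> A + B"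
    unfolding convolution_def
    by (subst AE_distr_iff[OF meas]) (auto simp: case_prod_beta)
  with p1 show ?thesis by simp
qed

lemma csp_support:
  assumes "compactly_supported_prob \<rho>"
  shows "\<exists>R\<ge>0. AE z in \<rho>. \<bar>z\<bar> \<le> R"
proof -
  from assms obtain K where P: "prob_space \<rho>" and S: "sets \<rho> = sets borel"
    and K: "compact K" "emeasure \<rho> K = 1"
    unfolding compactly_supported_prob_def by blast
  interpret prob_space \<rho> by fact
  have "bounded K" using K(1) by (rule compact_imp_bounded)
  then obtain R where R: "\<forall>x\<in>K. norm x \<le> R" by (auto simp: bounded_iff)
  have Ke: "K \<in> events" using S K(1) by (simp add: compact_imp_closed)
  have "prob K = 1" using K(2) Ke by (simp add: emeasure_eq_measure)
  then have "AE z in \<rho>. z \<in> K" using Ke by (intro AE_prob_1)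
  then have "AE z in \<rho>. \<bar>z\<bar> \<le> max R 0" by eventually_elim (use R in auto)
  then show ?thesis by (intro exI[of _ "max R 0"]) auto
qed

lemma conv_pow_support:
  assumes P: "prob_space \<rho>" and S: "sets \<rho> = sets borel" and A: "AE z in \<rho>. \<bar>z\<bar> \<le> R"
  shows "prob_space (conv_pow \<rho> n) \<and> sets (conv_pow \<rho> n) = sets borel \<and>
         (AE z in conv_pow \<rho> n. \<bar>z\<bar> \<le> real n * R)"
proof (induction n)
  case 0
  have "AE z in return borel (0::real). z = 0" by (simp add: AE_return)
  then show ?case unfolding conv_pow.simps(1) by (simp add: prob_space_return)
next
  case (Suc n)
  have "prob_space (convolution \<rho> (conv_pow \<rho> n)) \<and>
      (AE z in convolution \<rho> (conv_pow \<rho> n). \<bar>z\<bar> \<le> R + real n * R)"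
    using Suc by (intro conv_support P S A) auto
  then show ?case unfolding conv_pow.simps(2) by (simp add: algebra_simps)
qed

lemma shifted_support:
  assumes P: "prob_space \<rho>" and S: "sets \<rho> = sets borel" and A: "AE z in \<rho>. \<bar>z\<bar> \<le> R"
  shows "prob_space (convolution (return borel x) (conv_pow \<rho> n)) \<and>
     (AE z in convolution (return borel x) (conv_pow \<rho> n). \<bar>z::real\<bar> \<le> \<bar>x\<bar> + real n * R)"
  using conv_pow_support[OF P S A, of n]
  by (intro conv_support) (auto simp: prob_space_return AE_return)

lemma cosh_le_exp_abs: "cosh (t::real) \<le> exp \<bar>t\<bar>"
proof -
  have "exp t + exp (-t) \<le> exp \<bar>t\<bar> + exp \<bar>t\<bar>" by (intro add_mono) auto
  then show ?thesis unfolding cosh_def by simp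
qed

lemma f_bound:
  fixes f :: "real \<Rightarrow> real"
  assumes fm: "f \<in> borel_measurable borel" and fb: "\<And>x. \<bar>f x\<bar> \<le> a * cosh (b * x)" and a: "a > 0"
    and P: "prob_space \<nu>" and S: "sets \<nu> = sets borel" and A: "AE z in \<nu>. \<bar>z\<bar> \<le> C"
  shows "AE z in \<nu>. \<bar>f z\<bar> \<le> a * exp (\<bar>b\<bar> * C)"
    "integrable \<nu> f" "\<bar>integral\<^sup>L \<nu> f\<bar> \<le> a * exp (\<bar>b\<bar> * C)"
proof -
  interpret prob_space \<nu> by fact
  show ae: "AE z in \<nu>. \<bar>f z\<bar> \<le> a * exp (\<bar>b\<bar> * C)"
    using A
  proof eventually_elim
    case (elim z)
    have bz: "\<bar>b * z\<bar> \<le> \<bar>b\<bar> * C" using elim by (simp add: abs_mult mult_left_mono)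
    have "\<bar>f z\<bar> \<le> a * cosh (b * z)" by (rule fb)
    also have "\<dots> \<le> a * exp \<bar>b * z\<bar>" using a cosh_le_exp_abs[of "b*z"] by (simp add: mult_left_mono)
    also have "a * exp \<bar>b * z\<bar> \<le> a * exp (\<bar>b\<bar> * C)" using a bz by simp
    finally show ?case .
  qed
  have fm': "f \<in> borel_measurable \<nu>" using fm by (simp add: measurable_cong_sets[OF S refl])
  show int: "integrable \<nu> f" using ae fm' by (intro integrable_const_bound) auto
  have "\<bar>integral\<^sup>L \<nu> f\<bar> \<le> integral\<^sup>L \<nu> (\<lambda>z. \<bar>f z\<bar>)"
    by (rule integral_abs_bound)
  also have "\<dots> \<le> a * exp (\<bar>b\<bar> * C)"
    using int ae by (intro integral_le_const) auto
  finally show "\<bar>integral\<^sup>L \<nu> f\<bar> \<le> a * exp (\<bar>b\<bar> * C)" .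
qed

lemma distr_bound:
  fixes f :: "real \<Rightarrow> real"
  assumes fm: "f \<in> borel_measurable borel" and S: "sets \<nu> = sets borel"
    and A: "AE z in \<nu>. \<bar>f z\<bar> \<le> B" and k: "k \<ge> 1" and B: "B \<ge> 0"
  shows "AE y in distr \<nu> borel (hk f k). \<bar>y\<bar> \<le> B"
proof -
  have m: "hk f k \<in> measurable \<nu> borel"
    using fm unfolding hk_def measurable_cong_sets[OF S refl] by measurable
  show ?thesis
  proof (subst AE_distr_iff[OF m])
    show "{x \<in> space borel. \<bar>x\<bar> \<le> B} \<in> sets borel" by measurable
    show "AE x in \<nu>. \<bar>hk f k x\<bar> \<le> B" using A
    proof eventually_elim
      case (elim z)
      have "\<bar>f z\<bar> / real k \<le> \<bar>f z\<bar>" using k by (simp add: divide_le_eq mult_le_cancel_left1)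
      with elim show ?case unfolding hk_def by simp
    qed
  qed
qed



lemma mixture_bind:
  assumes P: "\<And>n. prob_space (\<mu> n)" and S: "\<And>n. sets (\<mu> n) = sets borel"
  shows "mixture P \<mu> = density (count_space UNIV) (\<lambda>n. ennreal (P n)) \<bind> \<mu>"
    (is "_ = ?B")
proof -
  have meas: "\<mu> \<in> measurable (density (count_space UNIV) (\<lambda>n. ennreal (P n))) (subprob_algebra borel)"
    using P S by (auto simp: space_subprob_algebra prob_space_imp_subprob_space)
  have sp: "space (density (count_space UNIV) (\<lambda>n. ennreal (P n))) \<noteq> {}" by simp
  have sB: "sets ?B = sets borel" using S by (subst sets_bind) auto
  then have spB: "space ?B = UNIV" using sets_eq_imp_space_eq by fastforce
  have eq: "(\<Sum>n. ennreal (P n) * emeasure (\<mu> n) A) = emeasure ?B A" if "A \<in> sets borel" for A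
  proof -
    have "emeasure ?B A = (\<integral>\<^sup>+n. emeasure (\<mu> n) A \<partial>density (count_space UNIV) (\<lambda>n. ennreal (P n)))"
      using that by (rule emeasure_bind[OF sp meas])
    also have "\<dots> = (\<integral>\<^sup>+n. ennreal (P n) * emeasure (\<mu> n) A \<partial>count_space UNIV)"
      by (subst nn_integral_density) auto
    also have "\<dots> = (\<Sum>n. ennreal (P n) * emeasure (\<mu> n) A)"
      by (rule nn_integral_count_space_nat)
    finally show ?thesis by simp
  qed
  have "mixture P \<mu> = measure_of UNIV (sets borel) (emeasure ?B)"
    unfolding mixture_def
  proof (rule measure_of_eq)
    show "sets borel \<subseteq> Pow UNIV" by auto
    fix A :: "real set" assume "A \<in> sigma_sets UNIV (sets borel)"
    then have "A \<in> sets borel"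
      by (metis sets.sigma_sets_eq space_borel)
    then show "(\<Sum>n. ennreal (P n) * emeasure (\<mu> n) A) = emeasure ?B A" by (rule eq)
  qed
  also have "\<dots> = ?B" using measure_of_of_measure[of ?B] sB spB by simp
  finally show ?thesis .
qed

lemma mixture_integrable:
  assumes P: "\<And>n. prob_space (\<mu> n)" and S: "\<And>n. sets (\<mu> n) = sets borel"
    and Pn: "\<And>n. P n \<ge> 0" and Bn: "\<And>n. B n \<ge> 0" and A: "\<And>n. AE y in \<mu> n. \<bar>y::real\<bar> \<le> B n"
    and sm: "summable (\<lambda>n. P n * B n)"
  shows "integrable (mixture P \<mu>) (\<lambda>y. y)"
proof -
  let ?D = "density (count_space UNIV) (\<lambda>n. ennreal (P n))"
  have meas: "\<mu> \<in> measurable ?D (subprob_algebra borel)"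
    using P S by (auto simp: space_subprob_algebra prob_space_imp_subprob_space)
  have sB: "sets (?D \<bind> \<mu>) = sets borel" using S by (subst sets_bind) auto
  have "(\<integral>\<^sup>+y. ennreal (norm y) \<partial>(?D \<bind> \<mu>)) = (\<integral>\<^sup>+n. \<integral>\<^sup>+y. ennreal (norm y) \<partial>\<mu> n \<partial>?D)"
    by (rule nn_integral_bind[OF _ meas]) measurable
  also have "\<dots> = (\<integral>\<^sup>+n. ennreal (P n) * \<integral>\<^sup>+y. ennreal (norm y) \<partial>\<mu> n \<partial>count_space UNIV)"
    by (subst nn_integral_density) auto
  also have "\<dots> = (\<Sum>n. ennreal (P n) * \<integral>\<^sup>+y. ennreal (norm y) \<partial>\<mu> n)"
    by (rule nn_integral_count_space_nat)
  also have "\<dots> \<le> (\<Sum>n. ennreal (P n * B n))"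
  proof (intro suminf_le summableI)
    fix n
    interpret prob_space "\<mu> n" by (rule P)
    have "(\<integral>\<^sup>+y. ennreal (norm y) \<partial>\<mu> n) \<le> ennreal (B n)"
      using A[of n] by (intro nn_integral_le_const) (auto elim!: eventually_mono)
    then show "ennreal (P n) * (\<integral>\<^sup>+y. ennreal (norm y) \<partial>\<mu> n) \<le> ennreal (P n * B n)"
      using Pn Bn by (simp add: ennreal_mult mult_left_mono)
  qed
  also have "\<dots> = ennreal (\<Sum>n. P n * B n)"
    using Pn Bn sm by (intro suminf_ennreal2) auto
  also have "\<dots> < \<infinity>" by simp
  finally have fin: "(\<integral>\<^sup>+y. ennreal (norm y) \<partial>(?D \<bind> \<mu>)) < \<infinity>" .
  have "integrable (?D \<bind> \<mu>) (\<lambda>y. y)"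
    using fin sB by (subst integrable_iff_bounded) (simp add: measurable_cong_sets[OF sB refl])
  then show ?thesis using mixture_bind[OF P S] by simp
qed


lemma pw_summable:
  assumes "l > 0"
  shows "summable (\<lambda>n. poisson_weight l n * (a * exp (\<bar>b\<bar> * (d + real n * R))))"
proof -
  have eq: "poisson_weight l n * (a * exp (\<bar>b\<bar> * (d + real n * R))) =
      (exp (- l) * a * exp (\<bar>b\<bar> * d)) * (inverse (fact n) * (l * exp (\<bar>b\<bar> * R)) ^ n)" for n
  proof -
    have "exp (\<bar>b\<bar> * (d + real n * R)) = exp (\<bar>b\<bar> * d) * exp (\<bar>b\<bar> * R) ^ n"
      by (simp add: distrib_left exp_add exp_of_nat_mult[symmetric] algebra_simps)
    then show ?thesis unfolding poisson_weight_def by (simp add: power_mult_distrib field_simps)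
  qed
  show ?thesis unfolding eq by (intro summable_mult summable_exp)
qed

lemma weight_cmp:
  assumes "l > 0" "\<bar>I\<bar> \<le> B"
  shows "norm (exp (- l) * l ^ n / fact (n + 1) * \<bar>I\<bar>) \<le> poisson_weight l n * B"
proof -
  have f: "(fact n :: real) \<le> fact (n + 1)" by (intro fact_mono) auto
  have "exp (- l) * l ^ n / fact (n + 1) \<le> exp (- l) * l ^ n / fact n"
    using assms(1) f by (intro divide_left_mono) (auto intro: mult_pos_pos)
  then have "exp (- l) * l ^ n / fact (n + 1) * \<bar>I\<bar> \<le> exp (- l) * l ^ n / fact n * B"
    using assms by (intro mult_mono) auto
  then show ?thesis using assms(1) unfolding poisson_weight_def by simp
qed

theorem theorem4:
  fixes f :: "real \<Rightarrow> real" and a b l :: real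
  assumes "continuous_on UNIV f"
    and "a > 0"
    and "\<And>x. \<bar>f x\<bar> \<le> a * cosh (b * x)"
    and "l > 0"
  shows "\<forall>\<rho> x. compactly_supported_prob \<rho> \<longrightarrow>
     integrable (sigma_x f l \<rho> x) (\<lambda>y. y) \<and>
     integrable (sigma f l \<rho>) (\<lambda>y. y) \<and>
     (\<forall>n. integrable (convolution (return borel x) (conv_pow \<rho> n)) f) \<and>
     (\<forall>n. integrable (conv_pow \<rho> (Suc n)) f) \<and>
     summable (\<lambda>n. exp (- l) * l ^ n / fact (n + 1) *
        \<bar>integral\<^sup>L (convolution (return borel x) (conv_pow \<rho> n)) f\<bar>) \<and>
     summable (\<lambda>n. exp (- l) * l ^ n / fact (n + 1) *
        \<bar>integral\<^sup>L (conv_pow \<rho> (Suc n)) f\<bar>)"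
proof (intro allI impI)
  fix \<rho> and x :: real
  assume csp: "compactly_supported_prob \<rho>"
  then have P: "prob_space \<rho>" and S: "sets \<rho> = sets borel"
    unfolding compactly_supported_prob_def by auto
  obtain R where R: "R \<ge> 0" "AE z in \<rho>. \<bar>z\<bar> \<le> R" using csp_support[OF csp] by blast
  have fm: "f \<in> borel_measurable borel" using assms(1) by (rule borel_measurable_continuous_onI)
  define \<nu>1 where "\<nu>1 n = convolution (return borel x) (conv_pow \<rho> n)" for n
  define \<nu>2 where "\<nu>2 n = conv_pow \<rho> (Suc n)" for n
  define B1 where "B1 n = a * exp (\<bar>b\<bar> * (\<bar>x\<bar> + real n * R))" for n
  define B2 where "B2 n = a * exp (\<bar>b\<bar> * (R + real n * R))" for n
  have p1: "prob_space (\<nu>1 n)" and s1: "sets (\<nu>1 n) = sets borel"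
    and a1: "AE z in \<nu>1 n. \<bar>z\<bar> \<le> \<bar>x\<bar> + real n * R" for n
    using shifted_support[OF P S R(2), of x n] unfolding \<nu>1_def by auto
  have p2: "prob_space (\<nu>2 n)" and s2: "sets (\<nu>2 n) = sets borel"
    and a2: "AE z in \<nu>2 n. \<bar>z\<bar> \<le> R + real n * R" for n
    using conv_pow_support[OF P S R(2), of "Suc n"] unfolding \<nu>2_def by (auto simp: algebra_simps)
  note fb1 = f_bound[OF fm assms(3) assms(2) p1 s1 a1]
  note fb2 = f_bound[OF fm assms(3) assms(2) p2 s2 a2]
  have B1: "B1 n \<ge> 0" "B2 n \<ge> 0" for n using assms(2) unfolding B1_def B2_def by auto
  have sum1: "summable (\<lambda>n. poisson_weight l n * B1 n)"
    unfolding B1_def by (rule pw_summable[OF assms(4)])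
  have sum2: "summable (\<lambda>n. poisson_weight l n * B2 n)"
    unfolding B2_def by (rule pw_summable[OF assms(4)])
  have pw: "poisson_weight l n \<ge> 0" for n
    using assms(4) unfolding poisson_weight_def by auto
  have hm1: "hk f k \<in> measurable (\<nu>1 n) borel" for k n
    using fm unfolding hk_def measurable_cong_sets[OF s1[of n] refl] by measurable
  have hm2: "hk f k \<in> measurable (\<nu>2 n) borel" for k n
    using fm unfolding hk_def measurable_cong_sets[OF s2[of n] refl] by measurable
  have i1: "integrable (sigma_x f l \<rho> x) (\<lambda>y. y)"
    unfolding sigma_x_def
  proof (rule mixture_integrable[where B=B1])
    fix n
    show "prob_space (distr (return borel x \<star> conv_pow \<rho> n) borel (hk f (n + 1)))"
      using prob_space.prob_space_distr[OF p1 hm1] unfolding \<nu>1_def by simp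
    show "sets (distr (return borel x \<star> conv_pow \<rho> n) borel (hk f (n + 1))) = sets borel" by simp
    show "0 \<le> poisson_weight l n" by (rule pw)
    show "0 \<le> B1 n" by (rule B1)
    show "AE y in distr (return borel x \<star> conv_pow \<rho> n) borel (hk f (n + 1)). \<bar>y\<bar> \<le> B1 n"
      using distr_bound[OF fm s1 fb1(1), of "n+1" n] B1 unfolding \<nu>1_def B1_def by simp
  qed (rule sum1)
  have i2: "integrable (sigma f l \<rho>) (\<lambda>y. y)"
    unfolding sigma_def
  proof (rule mixture_integrable[where B=B2])
    fix n
    show "prob_space (distr (conv_pow \<rho> (Suc n)) borel (hk f (n + 1)))"
      using prob_space.prob_space_distr[OF p2 hm2] unfolding \<nu>2_def by simp
    show "sets (distr (conv_pow \<rho> (Suc n)) borel (hk f (n + 1))) = sets borel" by simp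
    show "0 \<le> poisson_weight l n" by (rule pw)
    show "0 \<le> B2 n" by (rule B1)
    show "AE y in distr (conv_pow \<rho> (Suc n)) borel (hk f (n + 1)). \<bar>y\<bar> \<le> B2 n"
      using distr_bound[OF fm s2 fb2(1), of "n+1" n] B1 unfolding \<nu>2_def B2_def by simp
  qed (rule sum2)
  have s3: "summable (\<lambda>n. exp (- l) * l ^ n / fact (n + 1) *
        \<bar>integral\<^sup>L (convolution (return borel x) (conv_pow \<rho> n)) f\<bar>)"
    by (rule summable_comparison_test'[OF sum1])
       (rule weight_cmp[OF assms(4)], use fb1(3) in \<open>simp add: \<nu>1_def B1_def\<close>)
  have s4: "summable (\<lambda>n. exp (- l) * l ^ n / fact (n + 1) *
        \<bar>integral\<^sup>L (conv_pow \<rho> (Suc n)) f\<bar>)"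
    by (rule summable_comparison_test'[OF sum2])
       (rule weight_cmp[OF assms(4)], use fb2(3) in \<open>simp add: \<nu>2_def B2_def\<close>)
  show "integrable (sigma_x f l \<rho> x) (\<lambda>y. y) \<and>
     integrable (sigma f l \<rho>) (\<lambda>y. y) \<and>
     (\<forall>n. integrable (convolution (return borel x) (conv_pow \<rho> n)) f) \<and>
     (\<forall>n. integrable (conv_pow \<rho> (Suc n)) f) \<and>
     summable (\<lambda>n. exp (- l) * l ^ n / fact (n + 1) *
        \<bar>integral\<^sup>L (convolution (return borel x) (conv_pow \<rho> n)) f\<bar>) \<and>
     summable (\<lambda>n. exp (- l) * l ^ n / fact (n + 1) *
        \<bar>integral\<^sup>L (conv_pow \<rho> (Suc n)) f\<bar>)"
    using i1 i2 s3 s4 fb1(2) fb2(2) unfolding \<nu>1_def \<nu>2_def by blast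
qed

end
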